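(* Let $m \geq 2$, let $X_1, \dots, X_m, Y, Z$ be arbitrary sets, let $\Delta \subseteq X_1 \times \cdots \times X_m \times Y$, and let $f_1, \dots, f_m : \Delta \to Z$ be functions. Suppose $\Gamma \subseteq \Delta$ is a nonempty subset such that, on $\Gamma$, each function $f_i$ ($1 \leq i \leq m$) does not depend on $x_j \in X_j$ for all $1 \leq j \leq m$, $j \neq i$. Then there exists a subset $\bar\Gamma$ with $\Gamma \subseteq \bar\Gamma \subseteq \Delta$ such that, on $\bar\Gamma$, each $f_i$ ($1 \leq i \leq m$) does not depend on $x_j \in X_j$ for all $1 \leq j \leq m$, $j \neq i$, and $\bar\Gamma$ is maximal with respect to inclusion among subsets of $\Delta$ containing $\Gamma$ that have this property.
   Context: For a subset $\Gamma \subseteq \Delta \subseteq X_1 \times \cdots \times X_m \times Y$ and functions $f_1,\dots,f_m:\Delta \to Z$, one says that "on $\Gamma$, each $f_i$ ($1\le i\le m$) does not depend on $x_j \in X_j$ for $1 \le j \le m$, $j \ne i$" if and only if there exist functions $g_i : pr_{X_i \times Y}(\Gamma) \to Z$, $1 \leq i \leq m$, such that $f_i|_\Gamma = g_i \circ pr_{X_i \times Y}|_\Gamma$ for every $1 \leq i \leq m$. Here $pr_{X_i \times Y} : X_1 \times \cdots \times X_m \times Y \to X_i \times Y$ denotes the projection $(x_1, \dots, x_m, y) \mapsto (x_i, y)$. *)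

theory Defs
  imports "HOL-Library.FuncSet"
begin

text \<open>Points of X_1 x ... x X_m x Y are pairs (x, y) with x :: nat => 'a an
  m-tuple indexed by {1..m} (extensional, i.e. x \<in> PiE {1..m} X) and y :: 'b.\<close>

definition pr_XY :: "nat \<Rightarrow> (nat \<Rightarrow> 'a) \<times> 'b \<Rightarrow> 'a \<times> 'b" where
  "pr_XY i p = (fst p i, snd p)"

text \<open>On Gamma, each f_i (1 <= i <= m) does not depend on x_j for j /= i:
  there are g_i : pr_{X_i x Y}(Gamma) -> Z with f_i = g_i o pr_{X_i x Y} on Gamma.\<close>

definition indep_on ::
  "nat \<Rightarrow> 'z set \<Rightarrow> (nat \<Rightarrow> (nat \<Rightarrow> 'a) \<times> 'b \<Rightarrow> 'z) \<Rightarrow> ((nat \<Rightarrow> 'a) \<times> 'b) set \<Rightarrow> bool" where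
  "indep_on m Z f \<Gamma> \<longleftrightarrow>
     (\<exists>g. \<forall>i\<in>{1..m}. g i \<in> pr_XY i ` \<Gamma> \<rightarrow> Z \<and> (\<forall>p\<in>\<Gamma>. f i p = g i (pr_XY i p)))"

end

theory Submission
  imports Defs
begin

lemma indep_iff:
  assumes "S \<subseteq> \<Delta>" "\<forall>i\<in>{1..m}. f i \<in> \<Delta> \<rightarrow> Z"
  shows "indep_on m Z f S \<longleftrightarrow>
    (\<forall>i\<in>{1..m}. \<forall>p\<in>S. \<forall>q\<in>S. pr_XY i p = pr_XY i q \<longrightarrow> f i p = f i q)"
proof
  assume "indep_on m Z f S"
  then show "\<forall>i\<in>{1..m}. \<forall>p\<in>S. \<forall>q\<in>S. pr_XY i p = pr_XY i q \<longrightarrow> f i p = f i q"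
    unfolding indep_on_def by metis
next
  assume H: "\<forall>i\<in>{1..m}. \<forall>p\<in>S. \<forall>q\<in>S. pr_XY i p = pr_XY i q \<longrightarrow> f i p = f i q"
  define g where "g i u = f i (SOME p. p \<in> S \<and> pr_XY i p = u)" for i u
  have "\<forall>i\<in>{1..m}. g i \<in> pr_XY i ` S \<rightarrow> Z \<and> (\<forall>p\<in>S. f i p = g i (pr_XY i p))"
  proof (rule ballI)
    fix i assume i: "i \<in> {1..m}"
    have *: "\<forall>p\<in>S. f i p = g i (pr_XY i p)"
    proof
      fix p assume p: "p \<in> S"
      have "\<exists>q. q \<in> S \<and> pr_XY i q = pr_XY i p" using p by blast
      then have "(SOME q. q \<in> S \<and> pr_XY i q = pr_XY i p) \<in> S \<and>
        pr_XY i (SOME q. q \<in> S \<and> pr_XY i q = pr_XY i p) = pr_XY i p" by (rule someI_ex)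
      then have "f i (SOME q. q \<in> S \<and> pr_XY i q = pr_XY i p) = f i p" using H i p by blast
      then show "f i p = g i (pr_XY i p)" unfolding g_def by simp
    qed
    moreover have "g i \<in> pr_XY i ` S \<rightarrow> Z"
    proof
      fix u assume "u \<in> pr_XY i ` S"
      then obtain p where p: "p \<in> S" "u = pr_XY i p" by blast
      then have "f i p \<in> Z" using assms i by blast
      then show "g i u \<in> Z" using * p by metis
    qed
    ultimately show "g i \<in> pr_XY i ` S \<rightarrow> Z \<and> (\<forall>p\<in>S. f i p = g i (pr_XY i p))" by blast
  qed
  then show "indep_on m Z f S" unfolding indep_on_def by blast
qed

theorem mainTheorem1:
  fixes m :: nat
    and X :: "nat \<Rightarrow> 'a set" and Y :: "'b set" and Z :: "'z set"
    and \<Delta> \<Gamma> :: "((nat \<Rightarrow> 'a) \<times> 'b) set"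
    and f :: "nat \<Rightarrow> (nat \<Rightarrow> 'a) \<times> 'b \<Rightarrow> 'z"
  assumes "m \<ge> 2"
    and "\<Delta> \<subseteq> (PiE {1..m} X) \<times> Y"
    and "\<forall>i\<in>{1..m}. f i \<in> \<Delta> \<rightarrow> Z"
    and "\<Gamma> \<subseteq> \<Delta>" and "\<Gamma> \<noteq> {}"
    and "indep_on m Z f \<Gamma>"
  shows "\<exists>\<Gamma>'. \<Gamma> \<subseteq> \<Gamma>' \<and> \<Gamma>' \<subseteq> \<Delta> \<and> indep_on m Z f \<Gamma>' \<and>
           (\<forall>\<Gamma>''. \<Gamma> \<subseteq> \<Gamma>'' \<and> \<Gamma>'' \<subseteq> \<Delta> \<and> indep_on m Z f \<Gamma>'' \<and> \<Gamma>' \<subseteq> \<Gamma>'' \<longrightarrow> \<Gamma>'' = \<Gamma>')"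
proof -
  define Q where "Q S \<longleftrightarrow> (\<forall>i\<in>{1..m}. \<forall>p\<in>S. \<forall>q\<in>S. pr_XY i p = pr_XY i q \<longrightarrow> f i p = f i q)" for S
  define A where "A = {S. \<Gamma> \<subseteq> S \<and> S \<subseteq> \<Delta> \<and> indep_on m Z f S}"
  have A_eq0: "{S. \<Gamma> \<subseteq> S \<and> S \<subseteq> \<Delta> \<and> indep_on m Z f S} = {S. \<Gamma> \<subseteq> S \<and> S \<subseteq> \<Delta> \<and> Q S}"
  proof (rule Collect_cong)
    fix S show "(\<Gamma> \<subseteq> S \<and> S \<subseteq> \<Delta> \<and> indep_on m Z f S) = (\<Gamma> \<subseteq> S \<and> S \<subseteq> \<Delta> \<and> Q S)"
    proof (cases "S \<subseteq> \<Delta>")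
      case True
      then have "indep_on m Z f S = Q S" unfolding Q_def by (rule indep_iff[OF _ assms(3)])
      then show ?thesis by simp
    qed simp
  qed
  have A_eq: "A = {S. \<Gamma> \<subseteq> S \<and> S \<subseteq> \<Delta> \<and> Q S}" unfolding A_def by (rule A_eq0)
  have "\<exists>M\<in>A. \<forall>X\<in>A. M \<subseteq> X \<longrightarrow> X = M"
  proof (rule subset_Zorn_nonempty)
    show "A \<noteq> {}" using assms(4,6) unfolding A_def by blast
  next
    fix C assume C: "C \<noteq> {}" "subset.chain A C"
    then have sub: "C \<subseteq> A" and ch: "\<forall>X\<in>C. \<forall>Y\<in>C. X \<subseteq> Y \<or> Y \<subseteq> X"
      by (auto simp: subset_chain_def)
    have "\<Gamma> \<subseteq> \<Union>C" using C(1) sub A_eq by blast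
    moreover have "\<Union>C \<subseteq> \<Delta>" using sub A_eq by blast
    moreover have "Q (\<Union>C)"
      unfolding Q_def
    proof (intro ballI impI)
      fix i p q assume i: "i \<in> {1..m}" and p: "p \<in> \<Union>C" and q: "q \<in> \<Union>C"
        and e: "pr_XY i p = pr_XY i q"
      from p q obtain S T where S: "S \<in> C" "p \<in> S" and T: "T \<in> C" "q \<in> T" by blast
      have "Q S" "Q T" using S T sub A_eq by auto
      from ch S(1) T(1) have "S \<subseteq> T \<or> T \<subseteq> S" by blast
      then show "f i p = f i q"
      proof
        assume "S \<subseteq> T" then show ?thesis using \<open>Q T\<close> S T i e unfolding Q_def by blast
      next
        assume "T \<subseteq> S" then show ?thesis using \<open>Q S\<close> S T i e unfolding Q_def by blast
      qed
    qed
    ultimately show "\<Union>C \<in> A" using A_eq by blast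
  qed
  then obtain M where M: "M \<in> A" "\<forall>X\<in>A. M \<subseteq> X \<longrightarrow> X = M" by blast
  have M1: "\<Gamma> \<subseteq> M" "M \<subseteq> \<Delta>" "indep_on m Z f M" using M(1) unfolding A_def by auto
  have M2: "\<forall>\<Gamma>''. \<Gamma> \<subseteq> \<Gamma>'' \<and> \<Gamma>'' \<subseteq> \<Delta> \<and> indep_on m Z f \<Gamma>'' \<and> M \<subseteq> \<Gamma>'' \<longrightarrow> \<Gamma>'' = M"
  proof (intro allI impI)
    fix G assume "\<Gamma> \<subseteq> G \<and> G \<subseteq> \<Delta> \<and> indep_on m Z f G \<and> M \<subseteq> G"
    then have "G \<in> A" "M \<subseteq> G" unfolding A_def by auto
    then show "G = M" using M(2) by blast
  qed
  show ?thesis using M1 M2 by blast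
qed

end
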